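(* Let $G$ and $H$ be graphs. If for every graph $K$ the conditions $G\mid K$ and $H\mid K$ together imply $G\otimes H\mid K$, then $G$ and $H$ are strongly disjoint.
   Context: A weight function on finite $U$ is $\alpha:U\times U\to\mathbb{R}$, $\alpha\ge0$, symmetric, summing to $1$; degree $p(u)=\sum_{u'}\alpha(u,u')$; a graph is $(U,\alpha)$. The tensor product of $G=(U,\alpha)$, $H=(V,\beta)$ is $G\otimes H=(U\times V,\alpha\otimes\beta)$ with $(\alpha\otimes\beta)((u,v),(u',v'))=\alpha(u,u')\beta(v,v')$. For graphs $G=(U,\alpha)$, $H=(V,\beta)$ with degrees $p,q$, $H\mid G$ means there is a surjective $\phi:U\to V$ with (i) $q(v)=\sum_{u\in\phi^{-1}(v)}p(u)$ for all $v$, and (ii) $q(v)\sum_{u'\in\phi^{-1}(v')}\alpha(u,u')=p(u)\beta(v,v')$ for all $v,v'$, $u\in\phi^{-1}(v)$. A weight joining of $\alpha,\beta$ is a weight function $\gamma$ on $U\times V$ with degree $r(u,v)=\sum_{(u',v')}\gamma((u,v),(u',v'))$ such that $\sum_v r(u,v)=p(u)$, $\sum_u r(u,v)=q(v)$, $p(u)\sum_{\tilde v}\gamma((u,v),(u',\tilde v))=\alpha(u,u')r(u,v)$ and $q(v)\sum_{\tilde u}\gamma((u,v),(\tilde u,v'))=\beta(v,v')r(u,v)$. $G,H$ are strongly disjoint if the only weight joining is $\alpha\otimes\beta$. *)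

theory Defs
  imports Complex_Main
begin

text \<open>A graph is a pair (U, alpha): a finite vertex set U and a weight function
  alpha on U x U (nonnegative, symmetric, total sum 1). Only values on U x U matter.\<close>

definition is_graph :: "'a set \<Rightarrow> ('a \<Rightarrow> 'a \<Rightarrow> real) \<Rightarrow> bool" where
  "is_graph U \<alpha> \<longleftrightarrow> finite U
     \<and> (\<forall>u\<in>U. \<forall>u'\<in>U. \<alpha> u u' \<ge> 0)
     \<and> (\<forall>u\<in>U. \<forall>u'\<in>U. \<alpha> u u' = \<alpha> u' u)
     \<and> (\<Sum>u\<in>U. \<Sum>u'\<in>U. \<alpha> u u') = 1"

definition deg :: "'a set \<Rightarrow> ('a \<Rightarrow> 'a \<Rightarrow> real) \<Rightarrow> 'a \<Rightarrow> real" where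
  "deg U \<alpha> u = (\<Sum>u'\<in>U. \<alpha> u u')"

definition tensor :: "('a \<Rightarrow> 'a \<Rightarrow> real) \<Rightarrow> ('b \<Rightarrow> 'b \<Rightarrow> real)
    \<Rightarrow> ('a \<times> 'b) \<Rightarrow> ('a \<times> 'b) \<Rightarrow> real" where
  "tensor \<alpha> \<beta> x y = \<alpha> (fst x) (fst y) * \<beta> (snd x) (snd y)"

text \<open>graph_divides V beta U alpha  means  (V,beta) | (U,alpha), i.e. H | G with H = (V,beta).\<close>
definition graph_divides :: "'b set \<Rightarrow> ('b \<Rightarrow> 'b \<Rightarrow> real) \<Rightarrow> 'a set \<Rightarrow> ('a \<Rightarrow> 'a \<Rightarrow> real) \<Rightarrow> bool" where
  "graph_divides V \<beta> U \<alpha> \<longleftrightarrow> (\<exists>\<phi>. \<phi> ` U = V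
     \<and> (\<forall>v\<in>V. deg V \<beta> v = (\<Sum>u\<in>{u\<in>U. \<phi> u = v}. deg U \<alpha> u))
     \<and> (\<forall>v\<in>V. \<forall>v'\<in>V. \<forall>u\<in>U. \<phi> u = v \<longrightarrow>
          deg V \<beta> v * (\<Sum>u'\<in>{u'\<in>U. \<phi> u' = v'}. \<alpha> u u') = deg U \<alpha> u * \<beta> v v'))"

definition weight_joining :: "'a set \<Rightarrow> ('a \<Rightarrow> 'a \<Rightarrow> real) \<Rightarrow> 'b set \<Rightarrow> ('b \<Rightarrow> 'b \<Rightarrow> real)
    \<Rightarrow> ('a \<times> 'b \<Rightarrow> 'a \<times> 'b \<Rightarrow> real) \<Rightarrow> bool" where
  "weight_joining U \<alpha> V \<beta> \<gamma> \<longleftrightarrow> is_graph (U \<times> V) \<gamma>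
     \<and> (\<forall>u\<in>U. (\<Sum>v\<in>V. deg (U \<times> V) \<gamma> (u, v)) = deg U \<alpha> u)
     \<and> (\<forall>v\<in>V. (\<Sum>u\<in>U. deg (U \<times> V) \<gamma> (u, v)) = deg V \<beta> v)
     \<and> (\<forall>u\<in>U. \<forall>v\<in>V. \<forall>u'\<in>U.
          deg U \<alpha> u * (\<Sum>v''\<in>V. \<gamma> (u, v) (u', v'')) = \<alpha> u u' * deg (U \<times> V) \<gamma> (u, v))
     \<and> (\<forall>u\<in>U. \<forall>v\<in>V. \<forall>v'\<in>V.
          deg V \<beta> v * (\<Sum>u''\<in>U. \<gamma> (u, v) (u'', v')) = \<beta> v v' * deg (U \<times> V) \<gamma> (u, v))"

definition strongly_disjoint :: "'a set \<Rightarrow> ('a \<Rightarrow> 'a \<Rightarrow> real) \<Rightarrow> 'b set \<Rightarrow> ('b \<Rightarrow> 'b \<Rightarrow> real) \<Rightarrow> bool" where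
  "strongly_disjoint U \<alpha> V \<beta> \<longleftrightarrow> (\<forall>\<gamma>. weight_joining U \<alpha> V \<beta> \<gamma> \<longrightarrow>
      (\<forall>x\<in>U \<times> V. \<forall>y\<in>U \<times> V. \<gamma> x y = tensor \<alpha> \<beta> x y))"

end

theory Submission
  imports Defs
begin

lemma gibbs:
  fixes g s :: "'c \<Rightarrow> real"
  assumes fin: "finite E" and g0: "\<forall>e\<in>E. g e \<ge> 0" and s0: "\<forall>e\<in>E. s e \<ge> 0"
    and gs: "sum g E = 1" and ss: "sum s E = 1"
    and pos: "\<forall>e\<in>E. g e > 0 \<longrightarrow> s e > 0"
    and eq: "(\<Sum>e\<in>E. g e * ln (g e)) = (\<Sum>e\<in>E. g e * ln (s e))"
  shows "\<forall>e\<in>E. g e = s e"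
proof -
  define t where "t e = s e - g e - (g e * ln (s e) - g e * ln (g e))" for e
  have tnn: "\<forall>e\<in>E. t e \<ge> 0"
  proof
    fix e assume e: "e\<in>E"
    show "t e \<ge> 0"
    proof (cases "g e = 0")
      case True thus ?thesis using s0 e by (simp add: t_def)
    next
      case False
      hence gp: "g e > 0" using g0 e by force
      hence sp: "s e > 0" using pos e by auto
      have "ln (s e / g e) \<le> s e / g e - 1" using ln_le_minus_one gp sp by simp
      hence "g e * ln (s e / g e) \<le> g e * (s e / g e - 1)" using gp by (simp add: mult_left_mono)
      thus ?thesis using gp sp by (simp add: t_def ln_div right_diff_distrib)
    qed
  qed
  have "sum t E = 0" using gs ss eq by (simp add: t_def sum_subtractf)
  hence tz: "\<forall>e\<in>E. t e = 0" using sum_nonneg_eq_0_iff[OF fin] tnn by blast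
  show ?thesis
  proof
    fix e assume e: "e\<in>E"
    show "g e = s e"
    proof (cases "g e = 0")
      case True
      have "t e = 0" using tz e by auto
      thus ?thesis using True by (simp add: t_def)
    next
      case False
      hence gp: "g e > 0" using g0 e by force
      hence sp: "s e > 0" using pos e by auto
      have "t e = g e * (s e / g e - 1 - ln (s e / g e))" using gp sp
        by (simp add: t_def ln_div field_simps)
      hence "s e / g e - 1 - ln (s e / g e) = 0" using tz e gp by simp
      hence "s e / g e = 1" using ln_eq_minus_one[of "s e / g e"] gp sp by simp
      thus ?thesis using gp by simp
    qed
  qed
qed

lemma sum_fst_slice:
  assumes "u \<in> U"
  shows "(\<Sum>y\<in>{y\<in>U\<times>V. fst y = u}. g y) = (\<Sum>v\<in>V. g (u,v))"
proof -
  have "{y\<in>U\<times>V. fst y = u} = Pair u ` V" using assms by auto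
  moreover have "inj_on (Pair u) V" by (auto simp: inj_on_def)
  ultimately show ?thesis by (simp add: sum.reindex)
qed

lemma sum_snd_slice:
  assumes "v \<in> V"
  shows "(\<Sum>y\<in>{y\<in>U\<times>V. snd y = v}. g y) = (\<Sum>u\<in>U. g (u,v))"
proof -
  have "{y\<in>U\<times>V. snd y = v} = (\<lambda>u. (u,v)) ` U" using assms by auto
  moreover have "inj_on (\<lambda>u. (u,v)) U" by (auto simp: inj_on_def)
  ultimately show ?thesis by (simp add: sum.reindex)
qed

lemma graph_fin: "is_graph U \<alpha> \<Longrightarrow> finite U" by (simp add: is_graph_def)
lemma graph_nn: "is_graph U \<alpha> \<Longrightarrow> u\<in>U \<Longrightarrow> u'\<in>U \<Longrightarrow> \<alpha> u u' \<ge> 0" by (simp add: is_graph_def)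
lemma graph_sym: "is_graph U \<alpha> \<Longrightarrow> u\<in>U \<Longrightarrow> u'\<in>U \<Longrightarrow> \<alpha> u u' = \<alpha> u' u" by (simp add: is_graph_def)
lemma graph_ne: "is_graph U \<alpha> \<Longrightarrow> U \<noteq> {}" by (auto simp: is_graph_def)
lemma deg_nn: "is_graph U \<alpha> \<Longrightarrow> u\<in>U \<Longrightarrow> deg U \<alpha> u \<ge> 0"
  unfolding deg_def by (rule sum_nonneg) (auto simp: is_graph_def)
lemma le_deg: "is_graph U \<alpha> \<Longrightarrow> u\<in>U \<Longrightarrow> u'\<in>U \<Longrightarrow> \<alpha> u u' \<le> deg U \<alpha> u"
  unfolding deg_def by (rule member_le_sum) (auto simp: is_graph_def)
lemma deg0: "is_graph U \<alpha> \<Longrightarrow> u\<in>U \<Longrightarrow> deg U \<alpha> u = 0 \<Longrightarrow> u'\<in>U \<Longrightarrow> \<alpha> u u' = 0"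
  using le_deg graph_nn by (metis order_antisym)

lemma joining_marg1:
  assumes J: "weight_joining U \<alpha> V \<beta> \<gamma>" and G: "is_graph U \<alpha>" and H: "is_graph V \<beta>"
    and u: "u\<in>U" and u': "u'\<in>U"
  shows "(\<Sum>v\<in>V. \<Sum>v'\<in>V. \<gamma> (u,v) (u',v')) = \<alpha> u u'"
proof -
  let ?r = "deg (U\<times>V) \<gamma>"
  have K: "is_graph (U\<times>V) \<gamma>" using J by (simp add: weight_joining_def)
  have h4: "\<And>v. v\<in>V \<Longrightarrow> deg U \<alpha> u * (\<Sum>v'\<in>V. \<gamma> (u,v) (u',v')) = \<alpha> u u' * ?r (u,v)"
    using J u u' unfolding weight_joining_def by blast
  have "deg U \<alpha> u * (\<Sum>v\<in>V. \<Sum>v'\<in>V. \<gamma> (u,v) (u',v')) = (\<Sum>v\<in>V. deg U \<alpha> u * (\<Sum>v'\<in>V. \<gamma> (u,v) (u',v')))"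
    by (rule sum_distrib_left)
  also have "\<dots> = (\<Sum>v\<in>V. \<alpha> u u' * ?r (u,v))"
    by (rule sum.cong) (simp_all add: h4)
  also have "\<dots> = \<alpha> u u' * deg U \<alpha> u" using J u by (simp add: weight_joining_def sum_distrib_left[symmetric])
  finally have eq: "deg U \<alpha> u * (\<Sum>v\<in>V. \<Sum>v'\<in>V. \<gamma> (u,v) (u',v')) = deg U \<alpha> u * \<alpha> u u'"
    by (simp add: mult.commute)
  show ?thesis
  proof (cases "deg U \<alpha> u = 0")
    case False thus ?thesis using eq by simp
  next
    case True
    then have a0: "\<alpha> u u' = 0" using deg0[OF G u _ u'] by simp
    have s0: "(\<Sum>v\<in>V. ?r (u,v)) = 0" using J u True by (simp add: weight_joining_def)
    have "\<forall>v\<in>V. ?r (u,v) = 0"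
      using s0 sum_nonneg_eq_0_iff[OF graph_fin[OF H], of "\<lambda>v. ?r (u,v)"] deg_nn[OF K] u by auto
    hence "\<forall>v\<in>V. \<forall>v'\<in>V. \<gamma> (u,v) (u',v') = 0" using deg0[OF K] u u' by auto
    thus ?thesis using a0 by simp
  qed
qed

lemma joining_marg2:
  assumes J: "weight_joining U \<alpha> V \<beta> \<gamma>" and G: "is_graph U \<alpha>" and H: "is_graph V \<beta>"
    and v: "v\<in>V" and v': "v'\<in>V"
  shows "(\<Sum>u\<in>U. \<Sum>u'\<in>U. \<gamma> (u,v) (u',v')) = \<beta> v v'"
proof -
  let ?r = "deg (U\<times>V) \<gamma>"
  have K: "is_graph (U\<times>V) \<gamma>" using J by (simp add: weight_joining_def)
  have h4: "\<And>u. u\<in>U \<Longrightarrow> deg V \<beta> v * (\<Sum>u'\<in>U. \<gamma> (u,v) (u',v')) = \<beta> v v' * ?r (u,v)"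
    using J v v' unfolding weight_joining_def by blast
  have "deg V \<beta> v * (\<Sum>u\<in>U. \<Sum>u'\<in>U. \<gamma> (u,v) (u',v')) = (\<Sum>u\<in>U. deg V \<beta> v * (\<Sum>u'\<in>U. \<gamma> (u,v) (u',v')))"
    by (rule sum_distrib_left)
  also have "\<dots> = (\<Sum>u\<in>U. \<beta> v v' * ?r (u,v))"
    by (rule sum.cong) (simp_all add: h4)
  also have "\<dots> = \<beta> v v' * deg V \<beta> v" using J v by (simp add: weight_joining_def sum_distrib_left[symmetric])
  finally have eq: "deg V \<beta> v * (\<Sum>u\<in>U. \<Sum>u'\<in>U. \<gamma> (u,v) (u',v')) = deg V \<beta> v * \<beta> v v'"
    by (simp add: mult.commute)
  show ?thesis
  proof (cases "deg V \<beta> v = 0")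
    case False thus ?thesis using eq by simp
  next
    case True
    then have a0: "\<beta> v v' = 0" using deg0[OF H v _ v'] by simp
    have s0: "(\<Sum>u\<in>U. ?r (u,v)) = 0" using J v True by (simp add: weight_joining_def)
    have "\<forall>u\<in>U. ?r (u,v) = 0"
      using s0 sum_nonneg_eq_0_iff[OF graph_fin[OF G], of "\<lambda>u. ?r (u,v)"] deg_nn[OF K] v by auto
    hence "\<forall>u\<in>U. \<forall>u'\<in>U. \<gamma> (u,v) (u',v') = 0" using deg0[OF K] v v' by auto
    thus ?thesis using a0 by simp
  qed
qed

lemma joining_div1:
  assumes J: "weight_joining U \<alpha> V \<beta> \<gamma>" and H: "is_graph V \<beta>"
  shows "graph_divides U \<alpha> (U\<times>V) \<gamma>"
  unfolding graph_divides_def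
proof (intro exI[of _ fst] conjI ballI impI)
  show "fst ` (U\<times>V) = U" using graph_ne[OF H] by auto
next
  fix u assume u: "u\<in>U"
  show "deg U \<alpha> u = (\<Sum>x\<in>{x\<in>U\<times>V. fst x = u}. deg (U\<times>V) \<gamma> x)"
    using J u by (simp add: sum_fst_slice weight_joining_def)
next
  fix u u' x assume u: "u\<in>U" and u': "u'\<in>U" and x: "x\<in>U\<times>V" and fx: "fst x = u"
  then obtain v where xv: "x = (u,v)" "v\<in>V" by auto
  show "deg U \<alpha> u * (\<Sum>y\<in>{y\<in>U\<times>V. fst y = u'}. \<gamma> x y) = deg (U\<times>V) \<gamma> x * \<alpha> u u'"
    using J u u' xv by (simp add: sum_fst_slice weight_joining_def mult.commute)
qed

lemma joining_div2:
  assumes J: "weight_joining U \<alpha> V \<beta> \<gamma>" and G: "is_graph U \<alpha>"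
  shows "graph_divides V \<beta> (U\<times>V) \<gamma>"
  unfolding graph_divides_def
proof (intro exI[of _ snd] conjI ballI impI)
  show "snd ` (U\<times>V) = V" using graph_ne[OF G] by auto
next
  fix v assume v: "v\<in>V"
  show "deg V \<beta> v = (\<Sum>x\<in>{x\<in>U\<times>V. snd x = v}. deg (U\<times>V) \<gamma> x)"
    using J v by (simp add: sum_snd_slice weight_joining_def)
next
  fix v v' x assume v: "v\<in>V" and v': "v'\<in>V" and x: "x\<in>U\<times>V" and fx: "snd x = v"
  then obtain u where xu: "x = (u,v)" "u\<in>U" by auto
  show "deg V \<beta> v * (\<Sum>y\<in>{y\<in>U\<times>V. snd y = v'}. \<gamma> x y) = deg (U\<times>V) \<gamma> x * \<beta> v v'"
    using J v v' xu by (simp add: sum_snd_slice weight_joining_def mult.commute)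
qed


lemma sum_prod: "(\<Sum>x\<in>U\<times>V. F x) = (\<Sum>u\<in>U. \<Sum>v\<in>V. F (u,v))"
  by (simp add: sum.cartesian_product)

lemma sub_bij: "bij_betw f W X \<Longrightarrow> bij_betw f {i\<in>W. P (f i)} {x\<in>X. P x}"
  unfolding bij_betw_def inj_on_def by (auto simp: image_iff)

lemma deg_transfer:
  assumes f: "bij_betw f W X"
  shows "deg W (\<lambda>i j. \<gamma> (f i) (f j)) i = deg X \<gamma> (f i)"
  unfolding deg_def using sum.reindex_bij_betw[OF f, of "\<gamma> (f i)"] by simp

lemma graph_transfer:
  assumes f: "bij_betw f W X" and K: "is_graph X \<gamma>"
  shows "is_graph W (\<lambda>i j. \<gamma> (f i) (f j))"
proof -
  have fi: "\<And>i. i\<in>W \<Longrightarrow> f i \<in> X" using f by (auto simp: bij_betw_def)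
  have "finite W" using f K bij_betw_finite by (auto simp: is_graph_def)
  moreover have "(\<Sum>i\<in>W. \<Sum>j\<in>W. \<gamma> (f i) (f j)) = (\<Sum>i\<in>W. deg X \<gamma> (f i))"
    using deg_transfer[OF f, of \<gamma>] by (simp add: deg_def)
  moreover have "\<dots> = (\<Sum>x\<in>X. deg X \<gamma> x)" using sum.reindex_bij_betw[OF f] by simp
  moreover have "\<dots> = 1" using K by (simp add: is_graph_def deg_def)
  ultimately show ?thesis using K fi unfolding is_graph_def by simp
qed

lemma div_transfer:
  assumes f: "bij_betw f W X" and D: "graph_divides A a X \<gamma>"
  shows "graph_divides A a W (\<lambda>i j. \<gamma> (f i) (f j))"
proof -
  from D obtain \<phi> where im: "\<phi> ` X = A"
    and d1: "\<forall>v\<in>A. deg A a v = (\<Sum>u\<in>{u\<in>X. \<phi> u = v}. deg X \<gamma> u)"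
    and d2: "\<forall>v\<in>A. \<forall>v'\<in>A. \<forall>u\<in>X. \<phi> u = v \<longrightarrow>
          deg A a v * (\<Sum>u'\<in>{u'\<in>X. \<phi> u' = v'}. \<gamma> u u') = deg X \<gamma> u * a v v'"
    unfolding graph_divides_def by blast
  have fi: "\<And>i. i\<in>W \<Longrightarrow> f i \<in> X" using f by (auto simp: bij_betw_def)
  show ?thesis unfolding graph_divides_def
  proof (intro exI[of _ "\<phi> \<circ> f"] conjI ballI impI)
    show "(\<phi> \<circ> f) ` W = A" using im f unfolding bij_betw_def by (metis image_comp)
  next
    fix v assume v: "v\<in>A"
    have "(\<Sum>u\<in>{u\<in>W. (\<phi> \<circ> f) u = v}. deg W (\<lambda>i j. \<gamma> (f i) (f j)) u)
        = (\<Sum>u\<in>{u\<in>W. \<phi> (f u) = v}. deg X \<gamma> (f u))"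
      by (simp add: deg_transfer[OF f])
    also have "\<dots> = (\<Sum>u\<in>{u\<in>X. \<phi> u = v}. deg X \<gamma> u)"
      using sum.reindex_bij_betw[OF sub_bij[OF f, of "\<lambda>x. \<phi> x = v"]] by simp
    finally show "deg A a v = (\<Sum>u\<in>{u\<in>W. (\<phi> \<circ> f) u = v}. deg W (\<lambda>i j. \<gamma> (f i) (f j)) u)"
      using d1 v by simp
  next
    fix v v' i assume v: "v\<in>A" and v': "v'\<in>A" and i: "i\<in>W" and iv: "(\<phi> \<circ> f) i = v"
    have "(\<Sum>j\<in>{j\<in>W. (\<phi> \<circ> f) j = v'}. \<gamma> (f i) (f j)) = (\<Sum>y\<in>{y\<in>X. \<phi> y = v'}. \<gamma> (f i) y)"
      using sum.reindex_bij_betw[OF sub_bij[OF f, of "\<lambda>x. \<phi> x = v'"]] by simp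
    thus "deg A a v * (\<Sum>j\<in>{j\<in>W. (\<phi> \<circ> f) j = v'}. \<gamma> (f i) (f j)) =
          deg W (\<lambda>i j. \<gamma> (f i) (f j)) i * a v v'"
      using d2 v v' fi[OF i] iv by (simp add: deg_transfer[OF f])
  qed
qed

lemma deg_cong: "\<forall>x\<in>X. \<forall>y\<in>X. \<gamma> x y = \<gamma>' x y \<Longrightarrow> x\<in>X \<Longrightarrow> deg X \<gamma> x = deg X \<gamma>' x"
  unfolding deg_def by simp

lemma div_cong:
  assumes c: "\<forall>x\<in>X. \<forall>y\<in>X. \<gamma> x y = \<gamma>' x y" and D: "graph_divides A a X \<gamma>"
  shows "graph_divides A a X \<gamma>'"
proof -
  from D obtain \<phi> where im: "\<phi> ` X = A"
    and d1: "\<forall>v\<in>A. deg A a v = (\<Sum>u\<in>{u\<in>X. \<phi> u = v}. deg X \<gamma> u)"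
    and d2: "\<forall>v\<in>A. \<forall>v'\<in>A. \<forall>u\<in>X. \<phi> u = v \<longrightarrow>
          deg A a v * (\<Sum>u'\<in>{u'\<in>X. \<phi> u' = v'}. \<gamma> u u') = deg X \<gamma> u * a v v'"
    unfolding graph_divides_def by blast
  have dc: "\<And>x. x\<in>X \<Longrightarrow> deg X \<gamma> x = deg X \<gamma>' x" using deg_cong[OF c] by blast
  show ?thesis unfolding graph_divides_def
  proof (intro exI[of _ \<phi>] conjI ballI impI)
    show "\<phi> ` X = A" by (rule im)
  next
    fix v assume v: "v\<in>A"
    have "(\<Sum>u\<in>{u\<in>X. \<phi> u = v}. deg X \<gamma> u) = (\<Sum>u\<in>{u\<in>X. \<phi> u = v}. deg X \<gamma>' u)"
      by (rule sum.cong) (auto simp: dc)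
    then show "deg A a v = (\<Sum>u\<in>{u\<in>X. \<phi> u = v}. deg X \<gamma>' u)"
      using d1 v by simp
  next
    fix v v' u assume v: "v\<in>A" and v': "v'\<in>A" and u: "u\<in>X" and uv: "\<phi> u = v"
    have e: "(\<Sum>u'\<in>{u'\<in>X. \<phi> u' = v'}. \<gamma> u u') = (\<Sum>u'\<in>{u'\<in>X. \<phi> u' = v'}. \<gamma>' u u')"
      using c u by (intro sum.cong) auto
    have "deg A a v * (\<Sum>u'\<in>{u'\<in>X. \<phi> u' = v'}. \<gamma> u u') = deg X \<gamma> u * a v v'"
      using d2 v v' u uv by blast
    thus "deg A a v * (\<Sum>u'\<in>{u'\<in>X. \<phi> u' = v'}. \<gamma>' u u') = deg X \<gamma>' u * a v v'"
      using e dc[OF u] by simp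
  qed
qed

lemma tensor_graph:
  assumes G: "is_graph U \<alpha>" and H: "is_graph V \<beta>"
  shows "is_graph (U\<times>V) (tensor \<alpha> \<beta>)"
proof -
  have "(\<Sum>x\<in>U\<times>V. \<Sum>y\<in>U\<times>V. tensor \<alpha> \<beta> x y)
      = (\<Sum>u\<in>U. \<Sum>v\<in>V. \<Sum>u'\<in>U. \<Sum>v'\<in>V. \<alpha> u u' * \<beta> v v')"
    by (simp add: sum_prod tensor_def)
  also have "\<dots> = (\<Sum>u\<in>U. \<Sum>v\<in>V. (\<Sum>u'\<in>U. \<alpha> u u') * (\<Sum>v'\<in>V. \<beta> v v'))"
    by (simp add: sum_product)
  also have "\<dots> = (\<Sum>u\<in>U. \<Sum>u'\<in>U. \<alpha> u u') * (\<Sum>v\<in>V. \<Sum>v'\<in>V. \<beta> v v')"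
    by (simp add: sum_product)
  also have "\<dots> = 1" using G H by (simp add: is_graph_def)
  finally show ?thesis using G H
    by (auto simp: is_graph_def tensor_def)
qed

lemma iso_from_div:
  assumes K: "is_graph X \<gamma>" and S: "is_graph Y s" and cardeq: "card Y = card X"
    and D: "graph_divides Y s X \<gamma>"
  shows "\<exists>\<theta>. bij_betw \<theta> X Y \<and> (\<forall>x\<in>X. \<forall>y\<in>X. \<gamma> x y = s (\<theta> x) (\<theta> y))"
proof -
  from D obtain \<phi> where im: "\<phi> ` X = Y"
    and d1: "\<forall>v\<in>Y. deg Y s v = (\<Sum>u\<in>{u\<in>X. \<phi> u = v}. deg X \<gamma> u)"
    and d2: "\<forall>v\<in>Y. \<forall>v'\<in>Y. \<forall>u\<in>X. \<phi> u = v \<longrightarrow>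
          deg Y s v * (\<Sum>u'\<in>{u'\<in>X. \<phi> u' = v'}. \<gamma> u u') = deg X \<gamma> u * s v v'"
    unfolding graph_divides_def by blast
  have inj: "inj_on \<phi> X" using eq_card_imp_inj_on[OF graph_fin[OF K], of \<phi>] im cardeq by simp
  have slice: "\<And>x. x\<in>X \<Longrightarrow> {u\<in>X. \<phi> u = \<phi> x} = {x}" using inj by (auto simp: inj_on_def)
  show ?thesis
  proof (intro exI[of _ \<phi>] conjI ballI)
    show "bij_betw \<phi> X Y" using inj im by (simp add: bij_betw_def)
  next
    fix x y assume x: "x\<in>X" and y: "y\<in>X"
    have px: "\<phi> x \<in> Y" "\<phi> y \<in> Y" using im x y by auto
    have e1: "deg Y s (\<phi> x) = deg X \<gamma> x" using d1 px slice[OF x] by simp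
    have "deg Y s (\<phi> x) * (\<Sum>u'\<in>{u'\<in>X. \<phi> u' = \<phi> y}. \<gamma> x u') = deg X \<gamma> x * s (\<phi> x) (\<phi> y)"
      using d2 px x by blast
    then have e2: "deg Y s (\<phi> x) * \<gamma> x y = deg X \<gamma> x * s (\<phi> x) (\<phi> y)"
      using slice[OF y] by simp
    show "\<gamma> x y = s (\<phi> x) (\<phi> y)"
    proof (cases "deg X \<gamma> x = 0")
      case True
      then show ?thesis using deg0[OF K x True y] deg0[OF S px(1) _ px(2)] e1 by simp
    next
      case False then show ?thesis using e1 e2 by simp
    qed
  qed
qed


lemma le_marg:
  fixes w :: "'b \<Rightarrow> 'b \<Rightarrow> real"
  assumes fin: "finite V" and w0: "\<forall>v\<in>V. \<forall>v'\<in>V. w v v' \<ge> 0" and v: "v\<in>V" and v': "v'\<in>V"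
  shows "w v v' \<le> (\<Sum>v\<in>V. \<Sum>v'\<in>V. w v v')"
proof -
  have "w v v' \<le> (\<Sum>v'\<in>V. w v v')" using v v' w0 fin by (intro member_le_sum) auto
  also have "\<dots> \<le> (\<Sum>v\<in>V. \<Sum>v'\<in>V. w v v')" using v w0 fin by (intro member_le_sum sum_nonneg) auto
  finally show ?thesis .
qed

lemma ent_split:
  fixes w :: "'a \<times> 'b \<Rightarrow> 'a \<times> 'b \<Rightarrow> real"
  assumes G: "is_graph U \<alpha>" and H: "is_graph V \<beta>"
    and w0: "\<forall>u\<in>U. \<forall>v\<in>V. \<forall>u'\<in>U. \<forall>v'\<in>V. w (u,v) (u',v') \<ge> 0"
    and m1: "\<forall>u\<in>U. \<forall>u'\<in>U. (\<Sum>v\<in>V. \<Sum>v'\<in>V. w (u,v) (u',v')) = \<alpha> u u'"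
    and m2: "\<forall>v\<in>V. \<forall>v'\<in>V. (\<Sum>u\<in>U. \<Sum>u'\<in>U. w (u,v) (u',v')) = \<beta> v v'"
  shows "(\<Sum>x\<in>U\<times>V. \<Sum>y\<in>U\<times>V. w x y * ln (tensor \<alpha> \<beta> x y))
     = (\<Sum>u\<in>U. \<Sum>u'\<in>U. \<alpha> u u' * ln (\<alpha> u u')) + (\<Sum>v\<in>V. \<Sum>v'\<in>V. \<beta> v v' * ln (\<beta> v v'))"
proof -
  have fU: "finite U" and fV: "finite V" using G H by (auto simp: is_graph_def)
  have trm: "w (u,v) (u',v') * ln (\<alpha> u u' * \<beta> v v') = w (u,v) (u',v') * ln (\<alpha> u u') + w (u,v) (u',v') * ln (\<beta> v v')"
    if u: "u\<in>U" and v: "v\<in>V" and u': "u'\<in>U" and v': "v'\<in>V" for u v u' v'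
  proof -
    have wa: "w (u,v) (u',v') \<le> \<alpha> u u'"
      using le_marg[OF fV, of "\<lambda>a b. w (u,a) (u',b)"] w0 m1 u v u' v' by auto
    have wb: "w (u,v) (u',v') \<le> \<beta> v v'"
      using le_marg[OF fU, of "\<lambda>a b. w (a,v) (b,v')"] w0 m2 u v u' v' by auto
    have a0: "\<alpha> u u' \<ge> 0" and b0: "\<beta> v v' \<ge> 0" using graph_nn[OF G u u'] graph_nn[OF H v v'] by auto
    show ?thesis
    proof (cases "\<alpha> u u' = 0 \<or> \<beta> v v' = 0")
      case True
      then have "w (u,v) (u',v') = 0" using wa wb w0 u v u' v' by force
      then show ?thesis by simp
    next
      case False
      then have "\<alpha> u u' > 0" "\<beta> v v' > 0" using a0 b0 by auto
      then show ?thesis by (simp add: ln_mult distrib_left)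
    qed
  qed
  have "(\<Sum>x\<in>U\<times>V. \<Sum>y\<in>U\<times>V. w x y * ln (tensor \<alpha> \<beta> x y))
      = (\<Sum>u\<in>U. \<Sum>v\<in>V. \<Sum>u'\<in>U. \<Sum>v'\<in>V. w (u,v) (u',v') * ln (\<alpha> u u' * \<beta> v v'))"
    by (simp add: sum_prod tensor_def)
  also have "\<dots> = (\<Sum>u\<in>U. \<Sum>v\<in>V. \<Sum>u'\<in>U. \<Sum>v'\<in>V. w (u,v) (u',v') * ln (\<alpha> u u') + w (u,v) (u',v') * ln (\<beta> v v'))"
    by (intro sum.cong refl) (simp add: trm)
  also have "\<dots> = (\<Sum>u\<in>U. \<Sum>v\<in>V. \<Sum>u'\<in>U. \<Sum>v'\<in>V. w (u,v) (u',v') * ln (\<alpha> u u'))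
       + (\<Sum>u\<in>U. \<Sum>v\<in>V. \<Sum>u'\<in>U. \<Sum>v'\<in>V. w (u,v) (u',v') * ln (\<beta> v v'))"
    by (simp add: sum.distrib)
  also have "(\<Sum>u\<in>U. \<Sum>v\<in>V. \<Sum>u'\<in>U. \<Sum>v'\<in>V. w (u,v) (u',v') * ln (\<alpha> u u'))
      = (\<Sum>u\<in>U. \<Sum>u'\<in>U. \<Sum>v\<in>V. \<Sum>v'\<in>V. w (u,v) (u',v') * ln (\<alpha> u u'))"
    by (intro sum.cong refl) (rule sum.swap)
  also have "\<dots> = (\<Sum>u\<in>U. \<Sum>u'\<in>U. (\<Sum>v\<in>V. \<Sum>v'\<in>V. w (u,v) (u',v')) * ln (\<alpha> u u'))"
    by (simp add: sum_distrib_right)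
  also have "\<dots> = (\<Sum>u\<in>U. \<Sum>u'\<in>U. \<alpha> u u' * ln (\<alpha> u u'))"
    using m1 by (intro sum.cong refl) simp
  also have "(\<Sum>u\<in>U. \<Sum>v\<in>V. \<Sum>u'\<in>U. \<Sum>v'\<in>V. w (u,v) (u',v') * ln (\<beta> v v'))
      = (\<Sum>v\<in>V. \<Sum>u\<in>U. \<Sum>u'\<in>U. \<Sum>v'\<in>V. w (u,v) (u',v') * ln (\<beta> v v'))"
    by (rule sum.swap)
  also have "\<dots> = (\<Sum>v\<in>V. \<Sum>u\<in>U. \<Sum>v'\<in>V. \<Sum>u'\<in>U. w (u,v) (u',v') * ln (\<beta> v v'))"
    by (intro sum.cong refl) (rule sum.swap)
  also have "\<dots> = (\<Sum>v\<in>V. \<Sum>v'\<in>V. \<Sum>u\<in>U. \<Sum>u'\<in>U. w (u,v) (u',v') * ln (\<beta> v v'))"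
    by (intro sum.cong refl) (rule sum.swap)
  also have "\<dots> = (\<Sum>v\<in>V. \<Sum>v'\<in>V. (\<Sum>u\<in>U. \<Sum>u'\<in>U. w (u,v) (u',v')) * ln (\<beta> v v'))"
    by (simp add: sum_distrib_right)
  also have "\<dots> = (\<Sum>v\<in>V. \<Sum>v'\<in>V. \<beta> v v' * ln (\<beta> v v'))"
    using m2 by (intro sum.cong refl) simp
  finally show ?thesis .
qed


theorem proposition4p6:
  fixes U :: "'a set" and \<alpha> :: "'a \<Rightarrow> 'a \<Rightarrow> real"
    and V :: "'b set" and \<beta> :: "'b \<Rightarrow> 'b \<Rightarrow> real"
  assumes G: "is_graph U \<alpha>" and H: "is_graph V \<beta>"
    and hyp: "\<forall>(W :: nat set) (\<kappa> :: nat \<Rightarrow> nat \<Rightarrow> real). is_graph W \<kappa> \<longrightarrow>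
        graph_divides U \<alpha> W \<kappa> \<longrightarrow> graph_divides V \<beta> W \<kappa> \<longrightarrow>
        graph_divides (U \<times> V) (tensor \<alpha> \<beta>) W \<kappa>"
  shows "strongly_disjoint U \<alpha> V \<beta>"
  unfolding strongly_disjoint_def
proof (intro allI impI)
  fix \<gamma> assume J: "weight_joining U \<alpha> V \<beta> \<gamma>"
  define X where "X = U \<times> V"
  define s where "s = tensor \<alpha> \<beta>"
  have K: "is_graph X \<gamma>" using J by (simp add: weight_joining_def X_def)
  have S: "is_graph X s" using tensor_graph[OF G H] by (simp add: X_def s_def)
  have finX: "finite X" using graph_fin[OF K] .
  obtain f where f: "bij_betw f {0..<card X} X" using ex_bij_betw_nat_finite[OF finX] by blast
  define W :: "nat set" where "W = {0..<card X}"
  define \<kappa> where "\<kappa> i j = \<gamma> (f i) (f j)" for i j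
  have fW: "bij_betw f W X" using f by (simp add: W_def)
  have Wg: "is_graph W \<kappa>" unfolding \<kappa>_def by (rule graph_transfer[OF fW K])
  have d1: "graph_divides U \<alpha> W \<kappa>" unfolding \<kappa>_def
    by (rule div_transfer[OF fW]) (simp add: X_def joining_div1[OF J H])
  have d2: "graph_divides V \<beta> W \<kappa>" unfolding \<kappa>_def
    by (rule div_transfer[OF fW]) (simp add: X_def joining_div2[OF J G])
  have d3: "graph_divides X s W \<kappa>" using hyp Wg d1 d2 by (simp add: X_def s_def)
  define g where "g = inv_into W f"
  have g: "bij_betw g X W" unfolding g_def by (rule bij_betw_inv_into[OF fW])
  have d4: "graph_divides X s X (\<lambda>x y. \<kappa> (g x) (g y))" by (rule div_transfer[OF g d3])
  have "\<forall>x\<in>X. \<forall>y\<in>X. \<kappa> (g x) (g y) = \<gamma> x y"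
    using bij_betw_inv_into_right[OF fW] by (simp add: \<kappa>_def g_def)
  then have d5: "graph_divides X s X \<gamma>" using div_cong[OF _ d4] by blast
  obtain \<theta> where th: "bij_betw \<theta> X X" and iso: "\<forall>x\<in>X. \<forall>y\<in>X. \<gamma> x y = s (\<theta> x) (\<theta> y)"
    using iso_from_div[OF K S refl d5] by blast
  have e1: "(\<Sum>x\<in>X. \<Sum>y\<in>X. \<gamma> x y * ln (\<gamma> x y)) = (\<Sum>x\<in>X. \<Sum>y\<in>X. s x y * ln (s x y))"
  proof -
    have "(\<Sum>x\<in>X. \<Sum>y\<in>X. \<gamma> x y * ln (\<gamma> x y)) = (\<Sum>x\<in>X. \<Sum>y\<in>X. s (\<theta> x) (\<theta> y) * ln (s (\<theta> x) (\<theta> y)))"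
      using iso by simp
    also have "\<dots> = (\<Sum>x\<in>X. \<Sum>y\<in>X. s (\<theta> x) y * ln (s (\<theta> x) y))"
    proof (rule sum.cong[OF refl])
      fix x show "(\<Sum>y\<in>X. s (\<theta> x) (\<theta> y) * ln (s (\<theta> x) (\<theta> y))) = (\<Sum>y\<in>X. s (\<theta> x) y * ln (s (\<theta> x) y))"
        using sum.reindex_bij_betw[OF th, of "\<lambda>y. s (\<theta> x) y * ln (s (\<theta> x) y)"] by simp
    qed
    also have "\<dots> = (\<Sum>x\<in>X. \<Sum>y\<in>X. s x y * ln (s x y))"
      using sum.reindex_bij_betw[OF th, of "\<lambda>x. \<Sum>y\<in>X. s x y * ln (s x y)"] by simp
    finally show ?thesis .
  qed
  have fU: "finite U" and fV: "finite V" using G H by (auto simp: is_graph_def)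
  have K0: "\<forall>u\<in>U. \<forall>v\<in>V. \<forall>u'\<in>U. \<forall>v'\<in>V. \<gamma> (u,v) (u',v') \<ge> 0"
    using graph_nn[OF K] by (auto simp: X_def)
  have gm1: "\<forall>u\<in>U. \<forall>u'\<in>U. (\<Sum>v\<in>V. \<Sum>v'\<in>V. \<gamma> (u,v) (u',v')) = \<alpha> u u'"
    using joining_marg1[OF J G H] by blast
  have gm2: "\<forall>v\<in>V. \<forall>v'\<in>V. (\<Sum>u\<in>U. \<Sum>u'\<in>U. \<gamma> (u,v) (u',v')) = \<beta> v v'"
    using joining_marg2[OF J G H] by blast
  have S0: "\<forall>u\<in>U. \<forall>v\<in>V. \<forall>u'\<in>U. \<forall>v'\<in>V. s (u,v) (u',v') \<ge> 0"
    using graph_nn[OF S] by (auto simp: X_def)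
  have sumb: "(\<Sum>v\<in>V. \<Sum>v'\<in>V. \<beta> v v') = 1" and suma: "(\<Sum>u\<in>U. \<Sum>u'\<in>U. \<alpha> u u') = 1"
    using G H by (auto simp: is_graph_def)
  have sm1: "\<forall>u\<in>U. \<forall>u'\<in>U. (\<Sum>v\<in>V. \<Sum>v'\<in>V. s (u,v) (u',v')) = \<alpha> u u'"
    using sumb by (simp add: s_def tensor_def sum_distrib_left[symmetric])
  have sm2: "\<forall>v\<in>V. \<forall>v'\<in>V. (\<Sum>u\<in>U. \<Sum>u'\<in>U. s (u,v) (u',v')) = \<beta> v v'"
    using suma by (simp add: s_def tensor_def sum_distrib_right[symmetric])
  have e2: "(\<Sum>x\<in>X. \<Sum>y\<in>X. \<gamma> x y * ln (s x y)) = (\<Sum>x\<in>X. \<Sum>y\<in>X. s x y * ln (s x y))"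
    using ent_split[OF G H K0 gm1 gm2] ent_split[OF G H S0 sm1 sm2] by (simp add: X_def s_def)
  have pos: "\<forall>x\<in>X. \<forall>y\<in>X. \<gamma> x y > 0 \<longrightarrow> s x y > 0"
  proof (intro ballI impI)
    fix x y assume x: "x\<in>X" and y: "y\<in>X" and gp: "\<gamma> x y > 0"
    obtain u v u' v' where xy: "x = (u,v)" "y = (u',v')" "u\<in>U" "v\<in>V" "u'\<in>U" "v'\<in>V"
      using x y by (auto simp: X_def)
    have wa: "\<gamma> x y \<le> \<alpha> u u'"
      using le_marg[OF fV, of "\<lambda>a b. \<gamma> (u,a) (u',b)"] K0 gm1 xy by auto
    have wb: "\<gamma> x y \<le> \<beta> v v'"
      using le_marg[OF fU, of "\<lambda>a b. \<gamma> (a,v) (b,v')"] K0 gm2 xy by auto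
    show "s x y > 0" using wa wb gp xy by (simp add: s_def tensor_def)
  qed
  let ?E = "X \<times> X"
  have cp: "\<And>F. (\<Sum>e\<in>?E. F e) = (\<Sum>x\<in>X. \<Sum>y\<in>X. F (x,y))" by (rule sum_prod)
  have "\<forall>e\<in>?E. (\<lambda>(x,y). \<gamma> x y) e = (\<lambda>(x,y). s x y) e"
  proof (rule gibbs)
    show "finite ?E" using finX by simp
    show "\<forall>e\<in>?E. 0 \<le> (\<lambda>(x,y). \<gamma> x y) e" using graph_nn[OF K] by auto
    show "\<forall>e\<in>?E. 0 \<le> (\<lambda>(x,y). s x y) e" using graph_nn[OF S] by auto
    show "sum (\<lambda>(x,y). \<gamma> x y) ?E = 1" using K by (simp add: cp is_graph_def)
    show "sum (\<lambda>(x,y). s x y) ?E = 1" using S by (simp add: cp is_graph_def)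
    show "\<forall>e\<in>?E. 0 < (\<lambda>(x,y). \<gamma> x y) e \<longrightarrow> 0 < (\<lambda>(x,y). s x y) e" using pos by auto
    show "(\<Sum>e\<in>?E. (\<lambda>(x,y). \<gamma> x y) e * ln ((\<lambda>(x,y). \<gamma> x y) e))
        = (\<Sum>e\<in>?E. (\<lambda>(x,y). \<gamma> x y) e * ln ((\<lambda>(x,y). s x y) e))"
      using e1 e2 by (simp add: cp)
  qed
  then show "\<forall>x\<in>U \<times> V. \<forall>y\<in>U \<times> V. \<gamma> x y = tensor \<alpha> \<beta> x y"
    by (auto simp: X_def s_def)
qed

end
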